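(* Let $C,A_1,\dots,A_M$ be real symmetric $N\times N$ matrices and $b\in\mathbb{R}^M$ such that the SDP $\min\{\operatorname{Tr}(C^TX):\operatorname{Tr}(A_i^TX)=b_i\ (i=1,\dots,M),\ X\succeq0\}$ has a feasible $X\succ0$ and finite optimal value. For $t>0$ let $X_t$ be the minimizer of $\operatorname{Tr}(C^TX)-\frac1t\log\det X$ subject to $\operatorname{Tr}(A_i^TX)=b_i$, $X\succ0$. Given $t_{k-1}>0$, the function $$g_{k-1}(t)=\operatorname{Tr}(C^TX_{t_{k-1}})-\frac{N}{t_{k-1}}+\frac Nt$$ satisfies $g_{k-1}(t)\le\operatorname{Tr}(C^TX_t)$ for every $t\ge t_{k-1}$. *)

theory Defs
  imports "HOL-Analysis.Analysis"
begin

definition symmetric_mat :: "real^'n^'n \<Rightarrow> bool" where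
  "symmetric_mat X \<longleftrightarrow> transpose X = X"

definition psd :: "real^'n^'n \<Rightarrow> bool" where
  "psd X \<longleftrightarrow> symmetric_mat X \<and> (\<forall>x. 0 \<le> x \<bullet> (X *v x))"

definition pd :: "real^'n^'n \<Rightarrow> bool" where
  "pd X \<longleftrightarrow> symmetric_mat X \<and> (\<forall>x. x \<noteq> 0 \<longrightarrow> 0 < x \<bullet> (X *v x))"

text \<open>Feasible set of the SDP: Tr(A_i^T X) = b_i for i = 1..M (indexed 0..M-1), X \<succeq> 0.\<close>
definition sdp_feasible ::
  "nat \<Rightarrow> (nat \<Rightarrow> real^'n^'n) \<Rightarrow> (nat \<Rightarrow> real) \<Rightarrow> (real^'n^'n) set" where
  "sdp_feasible M A b = {X. (\<forall>i<M. trace (transpose (A i) ** X) = b i) \<and> psd X}"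

definition barrier_obj :: "real^'n^'n \<Rightarrow> real \<Rightarrow> real^'n^'n \<Rightarrow> real" where
  "barrier_obj C t X = trace (transpose C ** X) - (1 / t) * ln (det X)"

definition barrier_minimizer ::
  "real^'n^'n \<Rightarrow> nat \<Rightarrow> (nat \<Rightarrow> real^'n^'n) \<Rightarrow> (nat \<Rightarrow> real) \<Rightarrow> real \<Rightarrow> real^'n^'n \<Rightarrow> bool" where
  "barrier_minimizer C M A b t X \<longleftrightarrow>
     (\<forall>i<M. trace (transpose (A i) ** X) = b i) \<and> pd X \<and>
     (\<forall>Y. (\<forall>i<M. trace (transpose (A i) ** Y) = b i) \<and> pd Y \<longrightarrow>
          barrier_obj C t X \<le> barrier_obj C t Y)"

end

theory Submission
  imports Defs
begin

lemma inv_both: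
  fixes A :: "real^'n^'n"
  assumes "invertible A"
  shows "A ** matrix_inv A = mat 1" "matrix_inv A ** A = mat 1"
proof -
  have "\<exists>A'. A ** A' = mat 1 \<and> A' ** A = mat 1" using assms by (simp add: invertible_def)
  then have "A ** matrix_inv A = mat 1 \<and> matrix_inv A ** A = mat 1"
    unfolding matrix_inv_def by (rule someI_ex)
  then show "A ** matrix_inv A = mat 1" "matrix_inv A ** A = mat 1" by auto
qed

lemma left_inv_unique:
  fixes A B Y :: "real^'n^'n"
  assumes "B ** A = mat 1" "A ** Y = mat 1"
  shows "B = Y"
  by (metis assms matrix_mul_assoc matrix_mul_lid matrix_mul_rid)

lemma pd_invertible:
  fixes X :: "real^'n^'n"
  assumes "pd X" shows "invertible X"
proof -
  have "inj ((*v) X)"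
  proof (rule injI)
    fix x y assume "X *v x = X *v y"
    then have "X *v (x - y) = 0" by (simp add: matrix_vector_mult_diff_distrib)
    then have "(x - y) \<bullet> (X *v (x - y)) = 0" by simp
    then show "x = y" using assms unfolding pd_def by (metis less_irrefl right_minus_eq)
  qed
  then show ?thesis using matrix_left_invertible_injective invertible_left_inverse by blast
qed

lemma inner_mat: "(x::real^'n) \<bullet> (E *v y) = (transpose E *v x) \<bullet> y"
  by (simp add: dot_lmul_matrix)

lemma pd_congr:
  fixes Q E :: "real^'n^'n"
  assumes "pd Q" "invertible E"
  shows "pd (E ** Q ** transpose E)"
  unfolding pd_def symmetric_mat_def
proof safe
  show "transpose (E ** Q ** transpose E) = E ** Q ** transpose E"
    using assms(1) by (simp add: pd_def symmetric_mat_def matrix_transpose_mul matrix_mul_assoc)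
  fix x :: "real^'n" assume "x \<noteq> 0"
  have "transpose E *v x \<noteq> 0"
  proof
    assume "transpose E *v x = 0"
    moreover have "inj ((*v) (transpose E))"
      by (simp add: assms(2) inj_matrix_vector_mult transpose_invertible)
    ultimately show False using \<open>x \<noteq> 0\<close> by (metis injD matrix_vector_mult_0_right)
  qed
  then have "0 < (transpose E *v x) \<bullet> (Q *v (transpose E *v x))" using assms(1) by (simp add: pd_def)
  also have "\<dots> = x \<bullet> ((E ** Q ** transpose E) *v x)"
    by (simp add: inner_mat matrix_vector_mul_assoc[symmetric])
  finally show "0 < x \<bullet> ((E ** Q ** transpose E) *v x)" .
qed

lemma pd_diag_pos:
  fixes M :: "real^'n^'n"
  assumes "pd M" shows "0 < M$k$k"
proof -
  have "0 < axis k 1 \<bullet> (M *v axis k 1)" using assms unfolding pd_def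
    by (metis axis_eq_0_iff zero_neq_one)
  then show ?thesis
    unfolding inner_axis' by (simp add: matrix_vector_mult_def axis_def if_distrib cong: if_cong)
qed


definition Um :: "real^'n \<Rightarrow> 'n \<Rightarrow> real^'n^'n" where
  "Um c k = (\<chi> i j. if j = k then c$i else 0)"

lemma mm_diff_r: "((P::real^'n^'n) - Q) ** A = P ** A - Q ** A"
  by (simp add: vec_eq_iff matrix_matrix_mult_def sum_subtractf left_diff_distrib)
lemma mm_diff_l: "(A::real^'n^'n) ** (P - Q) = A ** P - A ** Q"
  by (simp add: vec_eq_iff matrix_matrix_mult_def sum_subtractf right_diff_distrib)
lemma mm_add_r: "((P::real^'n^'n) + Q) ** A = P ** A + Q ** A"
  by (simp add: vec_eq_iff matrix_matrix_mult_def sum.distrib distrib_right)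
lemma transpose_diff': "transpose ((P::real^'n^'n) - Q) = transpose P - transpose Q"
  by (simp add: vec_eq_iff transpose_def)

lemma if0_mult: "(if P then x else (0::real)) * y = (if P then x * y else 0)" by simp
lemma mult_if0: "y * (if P then x else (0::real)) = (if P then y * x else 0)" by simp

lemma UA: "(Um c k ** (A::real^'n^'n))$i$j = c$i * A$k$j"
  by (simp add: Um_def matrix_matrix_mult_def if0_mult)

lemma AU: "((A::real^'n^'n) ** transpose (Um c k))$i$j = A$i$k * c$j"
  by (simp add: Um_def matrix_matrix_mult_def transpose_def mult_if0)

lemma FA_comp: "((mat 1 - Um c k) ** (A::real^'n^'n))$i$j = A$i$j - c$i * A$k$j"
  by (simp add: mm_diff_r UA)

lemma AF_comp: "((A::real^'n^'n) ** transpose (mat 1 - Um c k))$i$j = A$i$j - A$i$k * c$j"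
  by (simp add: transpose_diff' mm_diff_l AU)

lemma F_inv: "c$k = 0 \<Longrightarrow> (mat 1 - Um c k) ** (mat 1 + Um c k) = mat 1"
  unfolding mm_diff_r matrix_add_ldistrib
  by (simp add: vec_eq_iff UA) (simp add: Um_def)

lemma elim_set:
  fixes Q :: "real^'n^'n"
  assumes "pd Q" "finite S"
  shows "\<exists>E::real^'n^'n. invertible E \<and> (\<forall>i j. i \<noteq> j \<and> i \<in> S \<longrightarrow> (E ** Q ** transpose E)$i$j = 0)"
  using assms(2)
proof (induction S rule: finite_induct)
  case empty
  show ?case by (rule exI[of _ "mat 1"]) (auto simp: invertible_def)
next
  case (insert k S)
  then obtain E where E: "invertible E" "\<forall>i j. i \<noteq> j \<and> i \<in> S \<longrightarrow> (E ** Q ** transpose E)$i$j = 0"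
    by blast
  define M where "M = E ** Q ** transpose E"
  have pdM: "pd M" unfolding M_def by (rule pd_congr[OF assms(1) E(1)])
  have symM: "\<And>i j. M$i$j = M$j$i" using pdM unfolding pd_def symmetric_mat_def
    by (metis transpose_def vec_lambda_beta)
  have Mkk: "0 < M$k$k" by (rule pd_diag_pos[OF pdM])
  have MS: "\<And>i j. i \<noteq> j \<Longrightarrow> i \<in> S \<Longrightarrow> M$i$j = 0" using E(2) M_def by blast
  define c where "c = (\<chi> i. if i = k then 0 else M$i$k / M$k$k)"
  define F where "F = mat 1 - Um c k"
  have ck: "c$k = 0" by (simp add: c_def)
  have Finv: "invertible F" unfolding F_def invertible_right_inverse using F_inv[OF ck] by blast
  have eq: "(F ** E) ** Q ** transpose (F ** E) = F ** M ** transpose F"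
    by (simp add: M_def matrix_transpose_mul matrix_mul_assoc)
  have comp: "(F ** M ** transpose F)$i$j = (M$i$j - c$i * M$k$j) - (M$i$k - c$i * M$k$k) * c$j" for i j
    unfolding F_def AF_comp FA_comp by simp
  show ?case
  proof (intro exI conjI allI impI)
    show "invertible (F ** E)" by (rule invertible_mult[OF Finv E(1)])
    fix i j assume ij: "i \<noteq> j \<and> i \<in> insert k S"
    show "(F ** E ** Q ** transpose (F ** E)) $ i $ j = 0"
    proof (cases "i = k")
      case True
      then show ?thesis unfolding eq comp using ij Mkk ck
        by (simp add: c_def symM[of j k])
    next
      case False
      then have iS: "i \<in> S" using ij by auto
      have "M$i$k = 0" using MS[OF False iS] .
      then show ?thesis unfolding eq comp using ij MS[OF _ iS] False
        by (simp add: c_def)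
    qed
  qed
qed

lemma elim:
  fixes Q :: "real^'n^'n"
  assumes "pd Q"
  shows "\<exists>E::real^'n^'n. invertible E \<and> (\<forall>i j. i \<noteq> j \<longrightarrow> (E ** Q ** transpose E)$i$j = 0)"
  using elim_set[OF assms, of UNIV] by auto

lemma pd_det_pos:
  fixes X :: "real^'n^'n"
  assumes "pd X" shows "0 < det X"
proof -
  obtain E :: "real^'n^'n" where E: "invertible E" "\<forall>i j. i \<noteq> j \<longrightarrow> (E ** X ** transpose E)$i$j = 0"
    using elim[OF assms] by blast
  have pdD: "pd (E ** X ** transpose E)" using pd_congr[OF assms E(1)] .
  have "det (E ** X ** transpose E) = (\<Prod>i\<in>UNIV. (E ** X ** transpose E)$i$i)"
    by (rule det_diagonal) (use E(2) in blast)
  also have "\<dots> > 0" by (rule prod_pos) (use pd_diag_pos[OF pdD] in auto)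
  finally have "0 < det E * det X * det E" by (simp add: det_mul)
  then have "0 < det X * (det E * det E)" by (simp add: ac_simps)
  moreover have "det E * det E \<ge> 0" by simp
  ultimately show ?thesis by (metis mult_nonpos_nonneg not_less)
qed


lemma det_rowrep:
  fixes X D :: "real^'n^'n"
  shows "det (\<chi> i. if i = k then D$i else X$i) =
    (\<Sum>p\<in>{p. p permutes (UNIV::'n set)}. of_int (sign p) * (D$k$p k * (\<Prod>i\<in>UNIV-{k}. X$i$p i)))"
  unfolding det_def
proof (rule sum.cong[OF refl])
  fix p :: "'n \<Rightarrow> 'n"
  have "(\<Prod>i\<in>UNIV. (\<chi> i. if i = k then D$i else X$i)$i$p i) =
        (\<chi> i. if i = k then D$i else X$i)$k$p k * (\<Prod>i\<in>UNIV-{k}. (\<chi> i. if i = k then D$i else X$i)$i$p i)"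
    by (rule prod.remove) auto
  also have "(\<Prod>i\<in>UNIV-{k}. (\<chi> i. if i = k then D$i else X$i)$i$p i) = (\<Prod>i\<in>UNIV-{k}. X$i$p i)"
    by (rule prod.cong) auto
  also have "(\<chi> i. if i = k then D$i else X$i)$k$p k = D$k$p k" by simp
  finally show "of_int (sign p) * (\<Prod>i\<in>UNIV. (\<chi> i. if i = k then D$i else X$i)$i$p i) =
      of_int (sign p) * (D$k$p k * (\<Prod>i\<in>UNIV-{k}. X$i$p i))" by simp
qed

lemma det_deriv:
  fixes X D :: "real^'n^'n"
  shows "((\<lambda>l. det (X + l *\<^sub>R D)) has_real_derivative
           (\<Sum>k\<in>UNIV. det (\<chi> i. if i = k then D$i else X$i))) (at 0)"
proof -
  let ?P = "{p. p permutes (UNIV::'n set)}"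
  have eq: "(\<lambda>l. det (X + l *\<^sub>R D)) =
     (\<lambda>l. \<Sum>p\<in>?P. of_int (sign p) * (\<Prod>i\<in>UNIV. X$i$p i + l * D$i$p i))"
    by (simp add: det_def)
  have d: "((\<lambda>l. \<Sum>p\<in>?P. of_int (sign p) * (\<Prod>i\<in>UNIV. X$i$p i + l * D$i$p i)) has_real_derivative
     (\<Sum>p\<in>?P. of_int (sign p) * (\<Sum>x\<in>UNIV. D$x$p x * (\<Prod>y\<in>UNIV-{x}. X$y$p y + 0 * D$y$p y)))) (at 0)"
  proof (rule DERIV_sum, rule DERIV_cmult, rule has_field_derivative_prod)
    fix p x
    show "((\<lambda>l. X$x$p x + l * D$x$p x) has_real_derivative D$x$p x) (at 0)"
      by (auto intro!: derivative_eq_intros)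
  qed
  have v: "(\<Sum>p\<in>?P. of_int (sign p) * (\<Sum>x\<in>UNIV. D$x$p x * (\<Prod>y\<in>UNIV-{x}. X$y$p y + 0 * D$y$p y))) =
      (\<Sum>k\<in>UNIV. det (\<chi> i. if i = k then D$i else X$i))"
    unfolding det_rowrep by (simp add: sum_distrib_left sum.swap[of _ ?P])
  show ?thesis using d unfolding eq v .
qed

lemma rowrep_trace:
  fixes X D Y :: "real^'n^'n"
  assumes "Y ** X = mat 1"
  shows "(\<Sum>k\<in>UNIV. det (\<chi> i. if i = k then D$i else X$i)) = det X * trace (D ** Y)"
proof -
  define G where "G = D ** Y"
  have DG: "D = G ** X" unfolding G_def by (metis assms matrix_mul_assoc matrix_mul_rid)
  have row: "D$k = (\<Sum>j\<in>UNIV. G$k$j *s X$j)" for k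
    unfolding DG by (simp add: vec_eq_iff matrix_matrix_mult_def sum_component)
  have one: "det (\<chi> i. if i = k then D$i else X$i) = G$k$k * det X" for k
  proof -
    have "det (\<chi> i. if i = k then D$i else X$i) = det (\<chi> i. if i = k then (\<Sum>j\<in>UNIV. G$k$j *s X$j) else X$i)"
      by (rule arg_cong[where f=det], rule Cart_lambda_cong) (auto simp: row)
    also have "\<dots> = (\<Sum>j\<in>UNIV. det (\<chi> i. if i = k then G$k$j *s X$j else X$i))"
      by (rule det_linear_row_sum) simp
    also have "\<dots> = (\<Sum>j\<in>UNIV. G$k$j * det (\<chi> i. if i = k then X$j else X$i))"
      by (simp add: det_row_mul)
    also have "\<dots> = (\<Sum>j\<in>UNIV. if j = k then G$k$j * det X else 0)"
    proof (rule sum.cong[OF refl])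
      fix j
      show "G$k$j * det (\<chi> i. if i = k then X$j else X$i) = (if j = k then G$k$j * det X else 0)"
      proof (cases "j = k")
        case True
        have "(\<chi> i. if i = k then X$j else X$i) = X" using True by (simp add: vec_eq_iff)
        then show ?thesis using True by simp
      next
        case False
        have "det (\<chi> i. if i = k then X$j else X$i) = 0"
          by (rule det_identical_rows[OF False[symmetric]]) (use False in \<open>simp add: row_def vec_eq_iff\<close>)
        then show ?thesis using False by simp
      qed
    qed
    also have "\<dots> = G$k$k * det X" by simp
    finally show ?thesis .
  qed
  show ?thesis unfolding one by (simp add: trace_def G_def sum_distrib_left mult.commute)
qed


lemma trace_lin:
  fixes B X Y :: "real^'n^'n"
  shows "trace (B ** (X + l *\<^sub>R (Y - X))) = trace (B ** X) + l * (trace (B ** Y) - trace (B ** X))"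
  by (simp add: trace_def matrix_matrix_mult_def sum.distrib sum_subtractf sum_distrib_left
      algebra_simps)

lemma mv_lin:
  fixes X Y :: "real^'n^'n"
  shows "(X + l *\<^sub>R (Y - X)) *v x = (X *v x) + l *\<^sub>R ((Y *v x) - (X *v x))"
  by (simp add: vec_eq_iff matrix_vector_mult_def sum.distrib sum_subtractf sum_distrib_left
      algebra_simps)

lemma pd_comb:
  fixes X Y :: "real^'n^'n"
  assumes "pd X" "pd Y" "0 \<le> l" "l \<le> 1"
  shows "pd (X + l *\<^sub>R (Y - X))"
  unfolding pd_def symmetric_mat_def
proof safe
  have sX: "transpose X = X" and sY: "transpose Y = Y" using assms unfolding pd_def symmetric_mat_def by auto
  show "transpose (X + l *\<^sub>R (Y - X)) = X + l *\<^sub>R (Y - X)"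
    using sX sY by (simp add: vec_eq_iff transpose_def)
next
  fix x :: "real^'n" assume "x \<noteq> 0"
  then have a: "0 < x \<bullet> (X *v x)" and b: "0 < x \<bullet> (Y *v x)" using assms unfolding pd_def by auto
  have "x \<bullet> ((X + l *\<^sub>R (Y - X)) *v x) = (1 - l) * (x \<bullet> (X *v x)) + l * (x \<bullet> (Y *v x))"
    unfolding mv_lin by (simp add: inner_add_right inner_diff_right algebra_simps)
  also have "\<dots> > 0"
  proof (cases "l = 1")
    case True then show ?thesis using b by simp
  next
    case False
    then have "0 < (1 - l) * (x \<bullet> (X *v x))" using a assms by simp
    moreover have "0 \<le> l * (x \<bullet> (Y *v x))" using b assms by simp
    ultimately show ?thesis by linarith
  qed
  finally show "0 < x \<bullet> ((X + l *\<^sub>R (Y - X)) *v x)" .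
qed

lemma FO:
  fixes C X Y :: "real^'n^'n"
  assumes s: "s > 0" and mX: "barrier_minimizer C M A b s X"
    and fY: "\<forall>i<M. trace (transpose (A i) ** Y) = b i" and pY: "pd Y"
  shows "trace (Y ** matrix_inv X) - real CARD('n) \<le>
         s * (trace (transpose C ** Y) - trace (transpose C ** X))"
proof -
  have fX: "\<forall>i<M. trace (transpose (A i) ** X) = b i" and pX: "pd X"
    and minX: "\<And>Z. (\<forall>i<M. trace (transpose (A i) ** Z) = b i) \<and> pd Z \<Longrightarrow>
          barrier_obj C s X \<le> barrier_obj C s Z"
    using mX unfolding barrier_minimizer_def by auto
  define D where "D = Y - X"
  define T where "T = trace (transpose C ** Y) - trace (transpose C ** X)"
  define Xi where "Xi = matrix_inv X"
  have XXi: "X ** Xi = mat 1" "Xi ** X = mat 1" using inv_both[OF pd_invertible[OF pX]] Xi_def by auto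
  define h where "h = (\<lambda>l. trace (transpose C ** (X + l *\<^sub>R D)) - 1 / s * ln (det (X + l *\<^sub>R D)))"
  have h_eq: "h = (\<lambda>l. trace (transpose C ** X) + l * T - 1 / s * ln (det (X + l *\<^sub>R D)))"
    unfolding h_def D_def T_def trace_lin by simp
  have dpos: "0 < det (X + 0 *\<^sub>R D)" using pd_det_pos[OF pX] by simp
  have dX: "det X \<noteq> 0" using pd_det_pos[OF pX] by simp
  have dln: "((\<lambda>l. ln (det (X + l *\<^sub>R D))) has_real_derivative
      1 / det (X + 0 *\<^sub>R D) * (det X * trace (D ** Xi))) (at 0)"
    using DERIV_chain2[OF DERIV_ln_divide[OF dpos] det_deriv[of X D]]
    unfolding rowrep_trace[OF XXi(2)] .
  have dh: "(h has_real_derivative (T - 1 / s * (1 / det (X + 0 *\<^sub>R D) * (det X * trace (D ** Xi))))) (at 0)"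
  proof -
    have dlin: "((\<lambda>l. trace (transpose C ** X) + l * T) has_real_derivative T) (at 0)"
      by (auto intro!: derivative_eq_intros)
    show ?thesis using DERIV_diff[OF dlin DERIV_cmult[OF dln, of "1/s"]] unfolding h_eq .
  qed
  have hmin: "h 0 \<le> h l" if "0 < l" "l \<le> 1" for l
  proof -
    have "(\<forall>i<M. trace (transpose (A i) ** (X + l *\<^sub>R D)) = b i) \<and> pd (X + l *\<^sub>R D)"
      using fX fY pd_comb[OF pX pY, of l] that unfolding D_def trace_lin by auto
    then have "barrier_obj C s X \<le> barrier_obj C s (X + l *\<^sub>R D)" by (rule minX)
    then show ?thesis unfolding h_def barrier_obj_def by simp
  qed
  have nonneg: "0 \<le> T - 1 / s * (1 / det (X + 0 *\<^sub>R D) * (det X * trace (D ** Xi)))"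
  proof (rule ccontr)
    assume "\<not> ?thesis"
    then obtain d where d: "d > 0" "\<forall>l>0. l < d \<longrightarrow> h 0 > h (0 + l)"
      using DERIV_neg_dec_right[OF dh] by force
    let ?l = "min (d/2) 1"
    have "h 0 > h ?l" using d by simp
    moreover have "h 0 \<le> h ?l" by (rule hmin) (use d in auto)
    ultimately show False by simp
  qed
  then have "trace (D ** Xi) / s \<le> T" using dX by simp
  then have "trace (D ** Xi) \<le> s * T" using s by (simp add: divide_le_eq mult.commute)
  moreover have "trace (D ** Xi) = trace (Y ** Xi) - real CARD('n)"
    unfolding D_def mm_diff_r trace_sub XXi trace_I by simp
  ultimately show ?thesis unfolding T_def Xi_def by simp
qed


lemma qf_axis: "axis i 1 \<bullet> ((M::real^'n^'n) *v axis i 1) = M$i$i"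
  unfolding inner_axis' by (simp add: matrix_vector_mult_def axis_def if_distrib cong: if_cong)

lemma cs_diag:
  fixes H K :: "real^'n^'n"
  assumes pH: "pd H" and HK: "H ** K = mat 1"
  shows "0 < K$i$i \<and> 1 \<le> H$i$i * K$i$i"
proof -
  define x :: "real^'n" where "x = axis i 1"
  define y where "y = K *v x"
  have Hy: "H *v y = x" unfolding y_def by (simp add: matrix_vector_mul_assoc HK)
  have sH: "transpose H = H" using pH unfolding pd_def symmetric_mat_def by auto
  have xx: "x \<bullet> x = 1" unfolding x_def by (simp add: inner_axis_axis)
  have xHx: "x \<bullet> (H *v x) = H$i$i" unfolding x_def by (rule qf_axis)
  have xy: "x \<bullet> y = K$i$i" unfolding x_def y_def by (rule qf_axis)
  have yHx: "y \<bullet> (H *v x) = 1" unfolding inner_mat sH Hy using xx by simp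
  have "y \<noteq> 0" using Hy xx by auto
  then have "0 < y \<bullet> (H *v y)" using pH unfolding pd_def by auto
  then have Kpos: "0 < K$i$i" unfolding Hy using xy by (simp add: inner_commute)
  define \<tau> where "\<tau> = 1 / K$i$i"
  have "0 \<le> (x - \<tau> *\<^sub>R y) \<bullet> (H *v (x - \<tau> *\<^sub>R y))"
  proof (cases "x - \<tau> *\<^sub>R y = 0")
    case True then show ?thesis by simp
  next
    case False then show ?thesis using pH unfolding pd_def by (simp add: less_imp_le)
  qed
  also have "(x - \<tau> *\<^sub>R y) \<bullet> (H *v (x - \<tau> *\<^sub>R y)) = H$i$i - 2 * \<tau> + \<tau> * \<tau> * K$i$i"
    by (simp add: matrix_vector_mult_diff_distrib matrix_vector_mult_scaleR Hy
        inner_diff_left inner_diff_right xHx xx yHx xy inner_commute[of y x] algebra_simps)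
  also have "\<dots> = H$i$i - 1 / K$i$i" unfolding \<tau>_def using Kpos by (simp add: field_simps)
  finally have "1 / K$i$i \<le> H$i$i" by simp
  then show ?thesis using Kpos by (simp add: divide_le_eq mult.commute)
qed

lemma scalar_cs:
  fixes m w :: "'n::finite \<Rightarrow> real"
  assumes "\<And>i. 0 < m i" "\<And>i. 0 < w i" "\<And>i. 1 \<le> m i * w i"
  shows "(real CARD('n))^2 \<le> (\<Sum>i\<in>UNIV. m i) * (\<Sum>i\<in>UNIV. w i)"
proof -
  have "(\<Sum>i\<in>UNIV. sqrt (m i) * sqrt (w i))\<^sup>2 \<le> (\<Sum>i\<in>UNIV. (sqrt (m i))\<^sup>2) * (\<Sum>i\<in>UNIV. (sqrt (w i))\<^sup>2)"
    by (rule Cauchy_Schwarz_ineq_sum)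
  also have "\<dots> = (\<Sum>i\<in>UNIV. m i) * (\<Sum>i\<in>UNIV. w i)" using assms by (simp add: less_imp_le)
  finally have cs: "(\<Sum>i\<in>UNIV. sqrt (m i) * sqrt (w i))\<^sup>2 \<le> (\<Sum>i\<in>UNIV. m i) * (\<Sum>i\<in>UNIV. w i)" .
  have "real CARD('n) = (\<Sum>i\<in>(UNIV::'n set). 1)" by simp
  also have "\<dots> \<le> (\<Sum>i\<in>UNIV. sqrt (m i) * sqrt (w i))"
  proof (rule sum_mono)
    fix i
    have "1 \<le> sqrt (m i * w i)" using assms(3)[of i] by simp
    then show "1 \<le> sqrt (m i) * sqrt (w i)" by (simp add: real_sqrt_mult)
  qed
  finally have "(real CARD('n))^2 \<le> (\<Sum>i\<in>UNIV. sqrt (m i) * sqrt (w i))\<^sup>2"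
    by (rule power_mono) simp
  then show ?thesis using cs by linarith
qed


lemma diag_mult_trace:
  fixes G K :: "real^'n^'n"
  assumes "\<forall>i j. i \<noteq> j \<longrightarrow> G$i$j = 0"
  shows "trace (G ** K) = (\<Sum>i\<in>UNIV. G$i$i * K$i$i)"
  unfolding trace_def
proof (rule sum.cong[OF refl])
  fix i
  have "(G ** K)$i$i = (\<Sum>a\<in>UNIV. G$i$a * K$a$i)" by (simp add: matrix_matrix_mult_def)
  also have "\<dots> = (\<Sum>a\<in>UNIV. if a = i then G$i$a * K$a$i else 0)"
    by (rule sum.cong) (use assms in auto)
  also have "\<dots> = G$i$i * K$i$i" by simp
  finally show "(G ** K)$i$i = G$i$i * K$i$i" .
qed

lemma mat_cs:
  fixes P Q :: "real^'n^'n"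
  assumes pP: "pd P" and pQ: "pd Q"
  shows "0 < trace (P ** matrix_inv Q) \<and> 0 < trace (Q ** matrix_inv P) \<and>
         (real CARD('n))^2 \<le> trace (P ** matrix_inv Q) * trace (Q ** matrix_inv P)"
proof -
  obtain E :: "real^'n^'n" where E: "invertible E" "\<forall>i j. i \<noteq> j \<longrightarrow> (E ** P ** transpose E)$i$j = 0"
    using elim[OF pP] by blast
  define Dg where "Dg = E ** P ** transpose E"
  define d where "d = (\<lambda>i. Dg$i$i)"
  have pDg: "pd Dg" unfolding Dg_def using pd_congr[OF pP E(1)] .
  have dpos: "\<And>i. 0 < d i" unfolding d_def using pd_diag_pos[OF pDg] .
  have Dgdiag: "\<forall>i j. i \<noteq> j \<longrightarrow> Dg$i$j = 0" using E(2) Dg_def by simp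
  define Ei where "Ei = matrix_inv E"
  have EEi: "E ** Ei = mat 1" "Ei ** E = mat 1" using inv_both[OF E(1)] Ei_def by auto
  have tEEi: "transpose E ** transpose Ei = mat 1" "transpose Ei ** transpose E = mat 1"
    by (metis EEi matrix_transpose_mul transpose_mat)+
  define Qi where "Qi = matrix_inv Q"
  have QQi: "Q ** Qi = mat 1" "Qi ** Q = mat 1" using inv_both[OF pd_invertible[OF pQ]] Qi_def by auto
  define Pi where "Pi = matrix_inv P"
  have PPi: "P ** Pi = mat 1" using inv_both[OF pd_invertible[OF pP]] Pi_def by auto
  define H where "H = E ** Q ** transpose E"
  have pH: "pd H" unfolding H_def using pd_congr[OF pQ E(1)] .
  define K where "K = transpose Ei ** Qi ** Ei"
  have HK: "H ** K = mat 1"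
  proof -
    have "H ** K = E ** Q ** (transpose E ** transpose Ei) ** Qi ** Ei"
      unfolding H_def K_def by (simp add: matrix_mul_assoc)
    also have "\<dots> = E ** (Q ** Qi) ** Ei" unfolding tEEi by (simp add: matrix_mul_assoc)
    also have "\<dots> = mat 1" unfolding QQi by (simp add: EEi)
    finally show ?thesis .
  qed
  have Peq: "P = Ei ** Dg ** transpose Ei"
  proof -
    have "Ei ** Dg ** transpose Ei = (Ei ** E) ** P ** (transpose E ** transpose Ei)"
      unfolding Dg_def by (simp add: matrix_mul_assoc)
    then show ?thesis unfolding EEi tEEi by simp
  qed
  define Dgi :: "real^'n^'n" where "Dgi = (\<chi> i j. if i = j then 1 / d i else 0)"
  have DgiDg: "Dgi ** Dg = mat 1"
  proof -
    have "(Dgi ** Dg)$i$j = (if i = j then 1 else 0)" for i j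
    proof -
      have "(Dgi ** Dg)$i$j = (\<Sum>a\<in>UNIV. Dgi$i$a * Dg$a$j)" by (simp add: matrix_matrix_mult_def)
      also have "\<dots> = (\<Sum>a\<in>UNIV. if a = i then 1 / d i * Dg$a$j else 0)"
        by (rule sum.cong) (auto simp: Dgi_def)
      also have "\<dots> = 1 / d i * Dg$i$j" by simp
      also have "\<dots> = (if i = j then 1 else 0)" using Dgdiag dpos[of i] unfolding d_def by auto
      finally show ?thesis .
    qed
    then show ?thesis by (simp add: vec_eq_iff mat_def)
  qed
  have Pi_eq: "Pi = transpose E ** Dgi ** E"
  proof (rule left_inv_unique[OF _ PPi, symmetric])
    have "transpose E ** Dgi ** E ** P = transpose E ** (Dgi ** (E ** Ei) ** Dg) ** transpose Ei"
      unfolding Peq by (simp add: matrix_mul_assoc)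
    also have "\<dots> = mat 1" unfolding EEi matrix_mul_rid DgiDg by (simp add: tEEi)
    finally show "transpose E ** Dgi ** E ** P = mat 1" .
  qed
  have a_eq: "trace (P ** Qi) = (\<Sum>i\<in>UNIV. d i * K$i$i)"
  proof -
    have "trace (P ** Qi) = trace (Ei ** (Dg ** transpose Ei ** Qi))"
      unfolding Peq by (simp add: matrix_mul_assoc)
    also have "\<dots> = trace (Dg ** K)" unfolding trace_mul_sym[of Ei] K_def by (simp add: matrix_mul_assoc)
    also have "\<dots> = (\<Sum>i\<in>UNIV. d i * K$i$i)" unfolding diag_mult_trace[OF Dgdiag] d_def ..
    finally show ?thesis .
  qed
  have Dgidiag: "\<forall>i j. i \<noteq> j \<longrightarrow> Dgi$i$j = 0" by (simp add: Dgi_def)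
  have c_eq: "trace (Q ** Pi) = (\<Sum>i\<in>UNIV. H$i$i / d i)"
  proof -
    have "trace (Q ** Pi) = trace ((Q ** transpose E ** Dgi) ** E)"
      unfolding Pi_eq by (simp add: matrix_mul_assoc)
    also have "\<dots> = trace (H ** Dgi)" unfolding trace_mul_sym[of _ E] H_def by (simp add: matrix_mul_assoc)
    also have "\<dots> = trace (Dgi ** H)" by (rule trace_mul_sym)
    also have "\<dots> = (\<Sum>i\<in>UNIV. H$i$i / d i)" unfolding diag_mult_trace[OF Dgidiag]
      by (simp add: Dgi_def)
    finally show ?thesis .
  qed
  have cs: "\<And>i. 0 < K$i$i \<and> 1 \<le> H$i$i * K$i$i" using cs_diag[OF pH HK] by blast
  have Hpos: "\<And>i. 0 < H$i$i" using pd_diag_pos[OF pH] .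
  have m: "\<And>i. 0 < d i * K$i$i" using dpos cs by simp
  have w: "\<And>i. 0 < H$i$i / d i" using dpos Hpos by simp
  have mw: "\<And>i. 1 \<le> (d i * K$i$i) * (H$i$i / d i)"
  proof -
    fix i
    have "(d i * K$i$i) * (H$i$i / d i) = H$i$i * K$i$i" using dpos[of i] by (simp add: field_simps)
    then show "1 \<le> (d i * K$i$i) * (H$i$i / d i)" using cs[of i] by simp
  qed
  have "0 < trace (P ** Qi)" unfolding a_eq by (rule sum_pos) (use m in auto)
  moreover have "0 < trace (Q ** Pi)" unfolding c_eq by (rule sum_pos) (use w in auto)
  moreover have "(real CARD('n))^2 \<le> trace (P ** Qi) * trace (Q ** Pi)"
    unfolding a_eq c_eq by (rule scalar_cs[OF m w mw])
  ultimately show ?thesis unfolding Qi_def Pi_def by simp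
qed


theorem lemma4p11:
  fixes C :: "real^'n^'n" and A :: "nat \<Rightarrow> real^'n^'n" and b :: "nat \<Rightarrow> real"
    and M :: nat and t t_prev :: real and X_prev X_t :: "real^'n^'n"
  assumes symC: "symmetric_mat C"
    and symA: "\<forall>i<M. symmetric_mat (A i)"
    and strictly_feasible: "\<exists>X0 \<in> sdp_feasible M A b. pd X0"
    and finite_opt: "bdd_below ((\<lambda>X. trace (transpose C ** X)) ` sdp_feasible M A b)"
    and t_prev_pos: "t_prev > 0"
    and X_prev: "barrier_minimizer C M A b t_prev X_prev"
    and t_ge: "t \<ge> t_prev"
    and X_t: "barrier_minimizer C M A b t X_t"
  shows "trace (transpose C ** X_prev) - real CARD('n) / t_prev + real CARD('n) / t
           \<le> trace (transpose C ** X_t)"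
proof -
  define N where "N = real CARD('n)"
  define s where "s = t_prev"
  define fs where "fs = trace (transpose C ** X_prev)"
  define ft where "ft = trace (transpose C ** X_t)"
  define \<Delta> where "\<Delta> = ft - fs"
  have s: "0 < s" using t_prev_pos s_def by simp
  have tpos: "0 < t" using t_ge t_prev_pos by simp
  have fs_: "\<forall>i<M. trace (transpose (A i) ** X_prev) = b i" "pd X_prev"
    using X_prev unfolding barrier_minimizer_def by auto
  have ft_: "\<forall>i<M. trace (transpose (A i) ** X_t) = b i" "pd X_t"
    using X_t unfolding barrier_minimizer_def by auto
  define a where "a = trace (X_t ** matrix_inv X_prev)"
  define c where "c = trace (X_prev ** matrix_inv X_t)"
  have fo1: "a - N \<le> s * \<Delta>"
    using FO[OF t_prev_pos X_prev ft_] unfolding a_def N_def s_def \<Delta>_def ft_def fs_def .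
  have fo2: "c - N \<le> t * (- \<Delta>)"
    using FO[OF tpos X_t fs_] unfolding c_def N_def \<Delta>_def ft_def fs_def by simp
  have cs: "0 < a" "0 < c" "N^2 \<le> a * c"
    using mat_cs[OF ft_(2) fs_(2)] unfolding a_def c_def N_def by auto
  have Npos: "0 \<le> N" unfolding N_def by simp
  have key: "N / t - N / s \<le> \<Delta>"
  proof (cases "0 \<le> \<Delta>")
    case True
    have "N / t \<le> N / s" using s t_ge s_def Npos by (simp add: divide_left_mono)
    then show ?thesis using True by simp
  next
    case False
    have "a * c \<le> (N + s * \<Delta>) * (N - t * \<Delta>)"
      by (rule mult_mono) (use fo1 fo2 cs in auto)
    then have "N^2 \<le> (N + s * \<Delta>) * (N - t * \<Delta>)" using cs by linarith
    then have "0 \<le> (- \<Delta>) * (N * (t - s) + s * t * \<Delta>)" by (simp add: power2_eq_square algebra_simps)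
    moreover have "0 < - \<Delta>" using False by simp
    ultimately have "0 \<le> N * (t - s) + s * t * \<Delta>"
      by (metis mult_pos_neg not_le)
    then have "N * (t - s) / (s * t) + \<Delta> \<ge> 0" using s tpos
      by (simp add: field_simps)
    moreover have "N * (t - s) / (s * t) = N / s - N / t" using s tpos by (simp add: field_simps)
    ultimately show ?thesis by simp
  qed
  then show ?thesis unfolding N_def s_def \<Delta>_def ft_def fs_def by simp
qed

end
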